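(* Let $X$ be a toric variety and $W\subsetneq X$ a proper closed subset none of whose irreducible components is contained in the toric boundary. Then there exists a toric blow-up $\Upsilon:\tilde X\to X$ such that the strict transform $\tilde W$ of $W$ contains no $0$-dimensional torus orbit of $\tilde X$.
   Context: Over an algebraically closed field $k$ of characteristic $0$. A toric blow-up of $X=X(\Sigma)$ is the toric birational morphism $X(\Sigma')\to X(\Sigma)$ induced by a refinement (subdivision) $\Sigma'$ of the fan $\Sigma$ with the same support. The strict transform of $W$ is the closure in $\tilde X$ of $\Upsilon^{-1}(W\cap T)$, where $T$ is the big torus (over which $\Upsilon$ is an isomorphism). *)

theory Defs
  imports "HOL-Analysis.Analysis" "HOL-Computational_Algebra.Polynomial"
begin

text \<open>Toric varieties X(Sigma) over a field 'k, described concretely through their points.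
  Lattice N = M = int^'n, pairing via the standard inner product on real^'n.\<close>

definition lat_to_real :: "int ^ 'n \<Rightarrow> real ^ 'n" where
  "lat_to_real m = (\<chi> i. real_of_int (m $ i))"

definition rat_cone :: "(real ^ 'n::finite) set \<Rightarrow> bool" where
  "rat_cone \<sigma> \<longleftrightarrow> (\<exists>S :: (int ^ 'n) set. finite S \<and>
      \<sigma> = {\<Sum>v\<in>S. c v *\<^sub>R lat_to_real v | c. \<forall>v\<in>S. c v \<ge> 0})"

definition strongly_convex :: "(real ^ 'n::finite) set \<Rightarrow> bool" where
  "strongly_convex \<sigma> \<longleftrightarrow> \<sigma> \<inter> uminus ` \<sigma> = {0}"

definition is_fan :: "(real ^ 'n::finite) set set \<Rightarrow> bool" where
  "is_fan \<Sigma> \<longleftrightarrow> finite \<Sigma> \<and>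
     (\<forall>\<sigma>\<in>\<Sigma>. rat_cone \<sigma> \<and> strongly_convex \<sigma>) \<and>
     (\<forall>\<sigma>\<in>\<Sigma>. \<forall>\<tau>. \<tau> face_of \<sigma> \<and> \<tau> \<noteq> {} \<longrightarrow> \<tau> \<in> \<Sigma>) \<and>
     (\<forall>\<sigma>\<in>\<Sigma>. \<forall>\<sigma>'\<in>\<Sigma>. (\<sigma> \<inter> \<sigma>') face_of \<sigma> \<and> (\<sigma> \<inter> \<sigma>') face_of \<sigma>')"

definition refines :: "(real ^ 'n::finite) set set \<Rightarrow> (real ^ 'n) set set \<Rightarrow> bool" where
  "refines \<Sigma>' \<Sigma> \<longleftrightarrow> is_fan \<Sigma>' \<and> (\<forall>\<sigma>'\<in>\<Sigma>'. \<exists>\<sigma>\<in>\<Sigma>. \<sigma>' \<subseteq> \<sigma>) \<and> \<Union>\<Sigma>' = \<Union>\<Sigma>"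

definition dual_lat :: "(real ^ 'n::finite) set \<Rightarrow> (int ^ 'n) set" where
  "dual_lat \<sigma> = {m. \<forall>v\<in>\<sigma>. lat_to_real m \<bullet> v \<ge> 0}"

definition perp_lat :: "(real ^ 'n::finite) set \<Rightarrow> (int ^ 'n) set" where
  "perp_lat \<tau> = {m. \<forall>v\<in>\<tau>. lat_to_real m \<bullet> v = 0}"

text \<open>Points of X(Sigma): the disjoint union over tau in Sigma of the orbits
  O(tau) = Hom(tau^perp \<inter> M, k^*); a point is (tau, chi) with chi extended by 0
  outside tau^perp \<inter> M (so chi m is the value of the character x^m at the point).\<close>
definition tpoints :: "(real ^ 'n::finite) set set \<Rightarrow>
    ((real ^ 'n) set \<times> (int ^ 'n \<Rightarrow> 'k::field)) set" where
  "tpoints \<Sigma> = {(\<tau>, chi). \<tau> \<in> \<Sigma> \<and> (\<forall>m. chi m \<noteq> 0 \<longleftrightarrow> m \<in> perp_lat \<tau>) \<and>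
      (\<forall>m\<in>perp_lat \<tau>. \<forall>m'\<in>perp_lat \<tau>. chi (m + m') = chi m * chi m')}"

definition chart :: "(real ^ 'n::finite) set set \<Rightarrow> (real ^ 'n) set \<Rightarrow>
    ((real ^ 'n) set \<times> (int ^ 'n \<Rightarrow> 'k::field)) set" where
  "chart \<Sigma> \<sigma> = {p \<in> tpoints \<Sigma>. fst p face_of \<sigma>}"

text \<open>Regular functions on U_sigma: finite k-linear combinations of characters x^m, m in sigma^dual \<inter> M.\<close>
definition chart_poly :: "(real ^ 'n::finite) set \<Rightarrow> (int ^ 'n \<Rightarrow> 'k::field) \<Rightarrow> bool" where
  "chart_poly \<sigma> f \<longleftrightarrow> finite {m. f m \<noteq> 0} \<and> {m. f m \<noteq> 0} \<subseteq> dual_lat \<sigma>"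

definition eval_poly :: "(int ^ 'n::finite \<Rightarrow> 'k::field) \<Rightarrow>
    ((real ^ 'n) set \<times> (int ^ 'n \<Rightarrow> 'k)) \<Rightarrow> 'k" where
  "eval_poly f p = (\<Sum>m\<in>{m. f m \<noteq> 0}. f m * snd p m)"

definition zclosed :: "(real ^ 'n::finite) set set \<Rightarrow>
    ((real ^ 'n) set \<times> (int ^ 'n \<Rightarrow> 'k::field)) set \<Rightarrow> bool" where
  "zclosed \<Sigma> Z \<longleftrightarrow> Z \<subseteq> tpoints \<Sigma> \<and>
     (\<forall>\<sigma>\<in>\<Sigma>. \<exists>F. (\<forall>f\<in>F. chart_poly \<sigma> f) \<and>
        Z \<inter> chart \<Sigma> \<sigma> = {p \<in> chart \<Sigma> \<sigma>. \<forall>f\<in>F. eval_poly f p = 0})"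

definition zclosure :: "(real ^ 'n::finite) set set \<Rightarrow>
    ((real ^ 'n) set \<times> (int ^ 'n \<Rightarrow> 'k::field)) set \<Rightarrow>
    ((real ^ 'n) set \<times> (int ^ 'n \<Rightarrow> 'k)) set" where
  "zclosure \<Sigma> A = \<Inter>{Z. zclosed \<Sigma> Z \<and> A \<subseteq> Z}"

definition zirreducible :: "(real ^ 'n::finite) set set \<Rightarrow>
    ((real ^ 'n) set \<times> (int ^ 'n \<Rightarrow> 'k::field)) set \<Rightarrow> bool" where
  "zirreducible \<Sigma> Z \<longleftrightarrow> zclosed \<Sigma> Z \<and> Z \<noteq> {} \<and>
     (\<forall>Z1 Z2. zclosed \<Sigma> Z1 \<and> zclosed \<Sigma> Z2 \<and> Z = Z1 \<union> Z2 \<longrightarrow> Z = Z1 \<or> Z = Z2)"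

definition irred_component :: "(real ^ 'n::finite) set set \<Rightarrow>
    ((real ^ 'n) set \<times> (int ^ 'n \<Rightarrow> 'k::field)) set \<Rightarrow>
    ((real ^ 'n) set \<times> (int ^ 'n \<Rightarrow> 'k)) set \<Rightarrow> bool" where
  "irred_component \<Sigma> W Z \<longleftrightarrow> zirreducible \<Sigma> Z \<and> Z \<subseteq> W \<and>
     (\<forall>Z'. zirreducible \<Sigma> Z' \<and> Z \<subseteq> Z' \<and> Z' \<subseteq> W \<longrightarrow> Z' = Z)"

definition big_torus :: "(real ^ 'n::finite) set set \<Rightarrow>
    ((real ^ 'n) set \<times> (int ^ 'n \<Rightarrow> 'k::field)) set" where
  "big_torus \<Sigma> = {p \<in> tpoints \<Sigma>. fst p = {0}}"

definition toric_boundary :: "(real ^ 'n::finite) set set \<Rightarrow>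
    ((real ^ 'n) set \<times> (int ^ 'n \<Rightarrow> 'k::field)) set" where
  "toric_boundary \<Sigma> = tpoints \<Sigma> - big_torus \<Sigma>"

text \<open>Strict transform of W under the toric blow-up X(Sigma') \<rightarrow> X(Sigma): the closure in
  X(Sigma') of the preimage of W \<inter> T; on T the morphism is the identity, and with our
  representation the torus points of X(Sigma') and X(Sigma) coincide literally.\<close>
definition strict_transform :: "(real ^ 'n::finite) set set \<Rightarrow>
    ((real ^ 'n) set \<times> (int ^ 'n \<Rightarrow> 'k::field)) set \<Rightarrow>
    ((real ^ 'n) set \<times> (int ^ 'n \<Rightarrow> 'k)) set" where
  "strict_transform \<Sigma>' W = zclosure \<Sigma>' {p \<in> big_torus \<Sigma>'. p \<in> W}"

definition orbit :: "(real ^ 'n::finite) set set \<Rightarrow> (real ^ 'n) set \<Rightarrow>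
    ((real ^ 'n) set \<times> (int ^ 'n \<Rightarrow> 'k::field)) set" where
  "orbit \<Sigma> \<tau> = {p \<in> tpoints \<Sigma>. fst p = \<tau>}"

definition orbit_dim :: "(real ^ 'n::finite) set \<Rightarrow> nat" where
  "orbit_dim \<tau> = CARD('n) - dim \<tau>"

end

theory Submission
  imports Defs
begin

definition gcone :: "('a::real_vector) set \<Rightarrow> 'a set" where
  "gcone T = {\<Sum>v\<in>T. c v *\<^sub>R v | c. \<forall>v\<in>T. 0 \<le> c v}"

lemma gconeI: "(\<forall>v\<in>T. 0 \<le> c v) \<Longrightarrow> x = (\<Sum>v\<in>T. c v *\<^sub>R v) \<Longrightarrow> x \<in> gcone T"
  unfolding gcone_def by auto

lemma gcone_0: "0 \<in> gcone T"
  unfolding gcone_def by (rule CollectI, rule exI[of _ "\<lambda>_. 0"]) simp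

lemma gcone_add: assumes "x \<in> gcone T" "y \<in> gcone T" shows "x + y \<in> gcone T"
proof -
  obtain c where c: "x = (\<Sum>v\<in>T. c v *\<^sub>R v)" "\<forall>v\<in>T. 0 \<le> c v" using assms(1) unfolding gcone_def by blast
  obtain d where d: "y = (\<Sum>v\<in>T. d v *\<^sub>R v)" "\<forall>v\<in>T. 0 \<le> d v" using assms(2) unfolding gcone_def by blast
  have "x + y = (\<Sum>v\<in>T. (c v + d v) *\<^sub>R v)" by (simp add: c d sum.distrib scaleR_add_left)
  moreover have "\<forall>v\<in>T. 0 \<le> c v + d v" using c d by auto
  ultimately show ?thesis by (intro gconeI[of _ "\<lambda>v. c v + d v"]) auto
qed

lemma gcone_scale: assumes "x \<in> gcone T" "0 \<le> t" shows "t *\<^sub>R x \<in> gcone T"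
proof -
  obtain c where c: "x = (\<Sum>v\<in>T. c v *\<^sub>R v)" "\<forall>v\<in>T. 0 \<le> c v" using assms(1) unfolding gcone_def by blast
  have "t *\<^sub>R x = (\<Sum>v\<in>T. (t * c v) *\<^sub>R v)" by (simp add: c scaleR_sum_right)
  moreover have "\<forall>v\<in>T. 0 \<le> t * c v" using c assms(2) by auto
  ultimately show ?thesis by (intro gconeI[of _ "\<lambda>v. t * c v"]) auto
qed

lemma gcone_sum: "(\<And>i. i \<in> I \<Longrightarrow> f i \<in> gcone T) \<Longrightarrow> sum f I \<in> gcone T"
proof (induction I rule: infinite_finite_induct)
  case (infinite A) then show ?case by (simp add: gcone_0)
next
  case empty then show ?case by (simp add: gcone_0)
next
  case (insert x F) then show ?case by (simp add: gcone_add)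
qed

lemma gcone_gen: assumes "finite T" "v \<in> T" shows "v \<in> gcone T"
proof -
  have "(\<Sum>w\<in>T. (if w = v then 1 else 0) *\<^sub>R w) = (\<Sum>w\<in>T. if w = v then w else 0)"
    by (rule sum.cong) auto
  also have "\<dots> = v" using assms by (simp add: sum.delta)
  finally have "(\<Sum>w\<in>T. (if w = v then 1 else 0) *\<^sub>R w) = v" .
  moreover have "\<forall>w\<in>T. 0 \<le> (if w = v then 1 else (0::real))" by auto
  ultimately show ?thesis by (intro gconeI[of _ "\<lambda>w. if w = v then 1 else 0"]) auto
qed

lemma gcone_least:
  assumes K0: "0 \<in> K" and Kadd: "\<And>x y. x \<in> K \<Longrightarrow> y \<in> K \<Longrightarrow> x + y \<in> K"
    and Ksc: "\<And>x t. x \<in> K \<Longrightarrow> 0 \<le> t \<Longrightarrow> t *\<^sub>R x \<in> K" and TK: "T \<subseteq> K"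
  shows "gcone T \<subseteq> K"
proof
  fix x assume "x \<in> gcone T"
  then obtain c where c: "x = (\<Sum>v\<in>T. c v *\<^sub>R v)" "\<forall>v\<in>T. 0 \<le> c v" unfolding gcone_def by blast
  have "\<And>A. A \<subseteq> T \<Longrightarrow> (\<Sum>v\<in>A. c v *\<^sub>R v) \<in> K"
  proof -
    fix A assume "A \<subseteq> T"
    then show "(\<Sum>v\<in>A. c v *\<^sub>R v) \<in> K"
    proof (induction A rule: infinite_finite_induct)
      case (infinite A) then show ?case by (simp add: K0)
    next
      case empty then show ?case by (simp add: K0)
    next
      case (insert y F) then show ?case using Kadd Ksc TK c(2) by auto
    qed
  qed
  then show "x \<in> K" using c(1) by blast
qed

lemma gcone_mono: "finite T' \<Longrightarrow> T \<subseteq> T' \<Longrightarrow> gcone T \<subseteq> gcone T'"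
  by (rule gcone_least) (auto simp: gcone_0 gcone_add gcone_scale gcone_gen)

lemma gcone_subset_T: "finite T \<Longrightarrow> T \<subseteq> gcone T"
  using gcone_gen by blast

lemma convex_gcone: "convex (gcone T)"
  unfolding convex_def by (auto intro!: gcone_add gcone_scale)

lemma gcone_restrict:
  assumes "A \<subseteq> T" "finite T" "\<forall>v\<in>T. 0 \<le> c v" "\<forall>v\<in>T - A. c v = 0"
  shows "(\<Sum>v\<in>T. c v *\<^sub>R v) \<in> gcone A"
proof -
  have "(\<Sum>v\<in>T. c v *\<^sub>R v) = (\<Sum>v\<in>A. c v *\<^sub>R v)"
    using assms by (intro sum.mono_neutral_right) auto
  then show ?thesis using assms unfolding gcone_def by auto
qed

lemma zero_face_of_gcone:
  assumes sc: "gcone T \<inter> uminus ` gcone T = {0}"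
  shows "{0} face_of gcone T"
proof -
  have key: "a = 0 \<and> b = 0" if a: "a \<in> gcone T" and b: "b \<in> gcone T" and seg: "0 \<in> open_segment a b" for a b
  proof -
  from seg obtain u where u: "0 < u" "u < 1" "0 = (1 - u) *\<^sub>R a + u *\<^sub>R b" by (auto simp: in_segment)
  have "- a = (u / (1 - u)) *\<^sub>R b"
  proof -
    have "(1 - u) *\<^sub>R a = - (u *\<^sub>R b)" using u(3) by (simp add: eq_neg_iff_add_eq_0)
    then have "(1/(1-u)) *\<^sub>R ((1 - u) *\<^sub>R a) = (1/(1-u)) *\<^sub>R (- (u *\<^sub>R b))" by simp
    then have "a = - ((u/(1-u)) *\<^sub>R b)" using u by simp
    then show ?thesis by simp
  qed
  then have "- a \<in> gcone T" using b u by (simp add: gcone_scale)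
  then have "a \<in> uminus ` gcone T" by (metis image_eqI minus_minus)
  then have a0: "a = 0" using a sc by blast
  have "b = 0" using u(3) a0 u by simp
  then show ?thesis using a0 by simp
  qed
  show ?thesis unfolding face_of_def using key gcone_0 by auto
qed

lemma face_gcone:
  fixes T :: "'a::real_vector set"
  assumes fin: "finite T" and F: "F face_of gcone T" and ne: "F \<noteq> {}"
  shows "F = gcone (T \<inter> F)"
proof -
  let ?K = "gcone T"
  have FK: "F \<subseteq> ?K" using F face_of_imp_subset by blast
  have F0: "0 \<in> F"
  proof -
    obtain x where x: "x \<in> F" using ne by blast
    show ?thesis
    proof (cases "x = 0")
      case True then show ?thesis using x by simp
    next
      case False
      have "x \<in> open_segment 0 (2 *\<^sub>R x)"
        unfolding in_segment using False by (intro conjI exI[of _ "1/2"]) auto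
      moreover have "2 *\<^sub>R x \<in> ?K" using x FK gcone_scale by fastforce
      ultimately show ?thesis using face_ofD[OF F _ gcone_0] x by blast
    qed
  qed
  have Fup: "t *\<^sub>R x \<in> F" if x: "x \<in> F" and t: "1 < t" for x t
  proof (cases "x = 0")
    case True then show ?thesis using F0 by simp
  next
    case False
    have "x \<in> open_segment 0 (t *\<^sub>R x)"
      unfolding in_segment using False t by (intro conjI exI[of _ "1/t"]) auto
    moreover have "t *\<^sub>R x \<in> ?K" using x FK gcone_scale t by fastforce
    ultimately show ?thesis using face_ofD[OF F _ gcone_0] x by blast
  qed
  have Fhalf: "y \<in> F" if y: "y \<in> ?K" and y2: "2 *\<^sub>R y \<in> F" for y
  proof (cases "y = 0")
    case True then show ?thesis using F0 by simp
  next
    case False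
    have ne3: "y \<noteq> 3 *\<^sub>R y"
    proof
      assume "y = 3 *\<^sub>R y"
      then have "(3 - 1) *\<^sub>R y = 0" by (metis scaleR_left_diff_distrib scaleR_one right_minus_eq)
      then show False using False by simp
    qed
    have "2 *\<^sub>R y \<in> open_segment y (3 *\<^sub>R y)"
      unfolding in_segment using ne3 by (intro conjI exI[of _ "1/2"]) (auto simp: scaleR_left_distrib[symmetric])
    moreover have "3 *\<^sub>R y \<in> ?K" using y gcone_scale by fastforce
    ultimately show ?thesis using face_ofD[OF F _ y] y2 by blast
  qed
  have Fsum: "y \<in> F" if y: "y \<in> ?K" and z: "z \<in> ?K" and yz: "y + z \<in> F" for y z
  proof -
    have "2 *\<^sub>R y \<in> F"
    proof (cases "y = z")
      case True then show ?thesis using yz by (simp add: scaleR_2)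
    next
      case False
      have "y + z \<in> open_segment (2 *\<^sub>R y) (2 *\<^sub>R z)"
        unfolding in_segment using False by (intro conjI exI[of _ "1/2"]) (auto simp: algebra_simps)
      moreover have "2 *\<^sub>R y \<in> ?K" "2 *\<^sub>R z \<in> ?K" using y z gcone_scale by fastforce+
      ultimately show ?thesis using face_ofD[OF F] yz by blast
    qed
    then show ?thesis using Fhalf y by blast
  qed
  have Fscale: "t *\<^sub>R x \<in> F" if x: "x \<in> F" and t: "0 \<le> t" for x t
  proof (cases "t \<le> 1")
    case True
    have "t *\<^sub>R x + (1 - t) *\<^sub>R x \<in> F" using x by (simp add: algebra_simps)
    moreover have "t *\<^sub>R x \<in> ?K" "(1 - t) *\<^sub>R x \<in> ?K" using x FK gcone_scale t True by fastforce+
    ultimately show ?thesis using Fsum by blast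
  next
    case False then show ?thesis using Fup x by simp
  qed
  have Fadd: "x + y \<in> F" if x: "x \<in> F" and y: "y \<in> F" for x y
  proof -
    have "(1/2) *\<^sub>R x + (1/2) *\<^sub>R y \<in> F"
      using face_of_imp_convex[OF F] x y by (simp add: convexD)
    then have "(2::real) *\<^sub>R ((1/2) *\<^sub>R x + (1/2) *\<^sub>R y) \<in> F" using Fup by simp
    then show ?thesis by (simp add: algebra_simps)
  qed
  have sub1: "gcone (T \<inter> F) \<subseteq> F"
    by (rule gcone_least) (auto simp: F0 Fadd Fscale)
  have sub2: "F \<subseteq> gcone (T \<inter> F)"
  proof
    fix x assume x: "x \<in> F"
    then have "x \<in> ?K" using FK by blast
    then obtain c where c: "x = (\<Sum>v\<in>T. c v *\<^sub>R v)" "\<forall>v\<in>T. 0 \<le> c v" unfolding gcone_def by blast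
    have inF: "v \<in> F" if v: "v \<in> T" and cv: "c v \<noteq> 0" for v
    proof -
      have xs: "x = c v *\<^sub>R v + (\<Sum>w\<in>T - {v}. c w *\<^sub>R w)"
        using c(1) fin v by (simp add: sum.remove)
      have r: "(\<Sum>w\<in>T - {v}. c w *\<^sub>R w) \<in> ?K"
        using gconeI[of "T - {v}" c] c(2) gcone_mono[of T "T - {v}"] fin by auto
      have cvK: "c v *\<^sub>R v \<in> ?K" using gcone_gen[OF fin v] c(2) v gcone_scale by blast
      have "c v *\<^sub>R v \<in> F" using Fsum[OF cvK r] xs x by simp
      then have "(1 / c v) *\<^sub>R (c v *\<^sub>R v) \<in> F" using Fscale c(2) v by (meson divide_nonneg_nonneg zero_le_one)
      then show ?thesis using cv by simp
    qed
    show "x \<in> gcone (T \<inter> F)"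
      using c inF fin by (subst c(1), intro gcone_restrict) auto
  qed
  show ?thesis using sub1 sub2 by blast
qed

lemma finite_faces_gcone:
  fixes T :: "'a::real_vector set"
  assumes "finite T"
  shows "finite {F. F face_of gcone T \<and> F \<noteq> {}}"
proof -
  have "{F. F face_of gcone T \<and> F \<noteq> {}} \<subseteq> gcone ` Pow T"
    using face_gcone[OF assms] by blast
  then show ?thesis using assms finite_subset by blast
qed

definition fm_set :: "'a::real_inner \<Rightarrow> 'a set \<Rightarrow> 'a set" where
  "fm_set a T = {g\<in>T. 0 \<le> a \<bullet> g} \<union>
     (\<lambda>(g,h). (a \<bullet> g) *\<^sub>R h - (a \<bullet> h) *\<^sub>R g) ` ({g\<in>T. 0 < a \<bullet> g} \<times> {h\<in>T. a \<bullet> h < 0})"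

lemma finite_fm_set: "finite T \<Longrightarrow> finite (fm_set a T)"
  unfolding fm_set_def by auto

lemma fm_correct:
  fixes a :: "'a::real_inner"
  assumes fin: "finite T"
  shows "gcone T \<inter> {v. 0 \<le> a \<bullet> v} = gcone (fm_set a T)"
proof
  let ?T' = "fm_set a T"
  have finT': "finite ?T'" using fin by (rule finite_fm_set)
  show "gcone ?T' \<subseteq> gcone T \<inter> {v. 0 \<le> a \<bullet> v}"
  proof (rule gcone_least)
    show "0 \<in> gcone T \<inter> {v. 0 \<le> a \<bullet> v}" by (simp add: gcone_0)
    show "x + y \<in> gcone T \<inter> {v. 0 \<le> a \<bullet> v}" if "x \<in> gcone T \<inter> {v. 0 \<le> a \<bullet> v}" "y \<in> gcone T \<inter> {v. 0 \<le> a \<bullet> v}" for x y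
      using that by (simp add: gcone_add inner_add_right)
    show "t *\<^sub>R x \<in> gcone T \<inter> {v. 0 \<le> a \<bullet> v}" if "x \<in> gcone T \<inter> {v. 0 \<le> a \<bullet> v}" "0 \<le> t" for x t
      using that by (simp add: gcone_scale)
    show "?T' \<subseteq> gcone T \<inter> {v. 0 \<le> a \<bullet> v}"
    proof
      fix w assume "w \<in> ?T'"
      then consider "w \<in> T" "0 \<le> a \<bullet> w"
        | g h where "g \<in> T" "0 < a \<bullet> g" "h \<in> T" "a \<bullet> h < 0" "w = (a \<bullet> g) *\<^sub>R h - (a \<bullet> h) *\<^sub>R g"
        unfolding fm_set_def by auto
      then show "w \<in> gcone T \<inter> {v. 0 \<le> a \<bullet> v}"
      proof cases
        case 1 then show ?thesis using gcone_gen[OF fin] by auto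
      next
        case 2
        have "(a \<bullet> g) *\<^sub>R h + (- (a \<bullet> h)) *\<^sub>R g \<in> gcone T"
          using 2 gcone_gen[OF fin] by (intro gcone_add gcone_scale) auto
        moreover have "a \<bullet> w = 0" using 2 by (simp add: inner_diff_right)
        ultimately show ?thesis using 2 by simp
      qed
    qed
  qed
next
  let ?T' = "fm_set a T"
  have finT': "finite ?T'" using fin by (rule finite_fm_set)
  show "gcone T \<inter> {v. 0 \<le> a \<bullet> v} \<subseteq> gcone ?T'"
  proof
    fix x assume "x \<in> gcone T \<inter> {v. 0 \<le> a \<bullet> v}"
    then have xK: "x \<in> gcone T" and ax: "0 \<le> a \<bullet> x" by auto
    then obtain c where c: "x = (\<Sum>v\<in>T. c v *\<^sub>R v)" "\<forall>v\<in>T. 0 \<le> c v" unfolding gcone_def by blast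
    define Q where "Q = {v\<in>T. 0 \<le> a \<bullet> v}"
    define P where "P = {v\<in>T. 0 < a \<bullet> v}"
    define N where "N = {v\<in>T. a \<bullet> v < 0}"
    have finQ: "finite Q" "finite P" "finite N" using fin by (auto simp: Q_def P_def N_def)
    have TQN: "T = Q \<union> N" "Q \<inter> N = {}" by (auto simp: Q_def N_def)
    have PQ: "P = {v\<in>Q. 0 < a \<bullet> v}" by (auto simp: P_def Q_def)
    have QT': "Q \<subseteq> ?T'" by (auto simp: Q_def fm_set_def)
    have gQ: "gcone Q \<subseteq> gcone ?T'" using gcone_mono[OF finT' QT'] .
    define XQ where "XQ = (\<Sum>v\<in>Q. c v *\<^sub>R v)"
    define XN where "XN = (\<Sum>v\<in>N. c v *\<^sub>R v)"
    define G where "G = (\<Sum>v\<in>P. c v *\<^sub>R v)"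
    define p where "p = (\<Sum>v\<in>P. c v * (a \<bullet> v))"
    define nn where "nn = (\<Sum>v\<in>N. c v * (a \<bullet> v))"
    have x_split: "x = XQ + XN" unfolding c(1) XQ_def XN_def using TQN finQ
      by (simp add: sum.union_disjoint)
    have aXQ: "a \<bullet> XQ = p"
    proof -
      have "a \<bullet> XQ = (\<Sum>v\<in>Q. c v * (a \<bullet> v))" unfolding XQ_def by (simp add: inner_sum_right)
      also have "\<dots> = (\<Sum>v\<in>Q. if 0 < a \<bullet> v then c v * (a \<bullet> v) else 0)"
        by (rule sum.cong) (auto simp: Q_def)
      also have "\<dots> = p" unfolding p_def PQ using finQ by (simp add: sum.inter_filter)
      finally show ?thesis .
    qed
    have aXN: "a \<bullet> XN = nn" unfolding XN_def nn_def by (simp add: inner_sum_right)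
    have ax2: "0 \<le> p + nn" using ax aXQ aXN x_split by (simp add: inner_add_right)
    have p0: "0 \<le> p" unfolding p_def using c(2) by (intro sum_nonneg) (auto simp: P_def)
    have nn0: "nn \<le> 0" unfolding nn_def using c(2) by (intro sum_nonpos) (auto simp: N_def mult_nonneg_nonpos)
    show "x \<in> gcone ?T'"
    proof (cases "p = 0")
      case True
      then have "nn = 0" using ax2 nn0 by simp
      then have "(\<Sum>v\<in>N. - (c v * (a \<bullet> v))) = 0" unfolding nn_def by (simp add: sum_negf)
      moreover have "\<forall>v\<in>N. 0 \<le> - (c v * (a \<bullet> v))" using c(2) by (auto simp: N_def mult_nonneg_nonpos)
      ultimately have "\<forall>v\<in>N. - (c v * (a \<bullet> v)) = 0" using sum_nonneg_eq_0_iff[OF finQ(3), of "\<lambda>v. - (c v * (a \<bullet> v))"] by simp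
      then have cN: "\<forall>v\<in>N. c v = 0" by (auto simp: N_def)
      have "x \<in> gcone Q" unfolding c(1)
        using cN c(2) fin TQN by (intro gcone_restrict) auto
      then show ?thesis using gQ by blast
    next
      case False
      then have pp: "0 < p" using p0 by simp
      define t where "t = - nn / p"
      have t01: "0 \<le> t" "t \<le> 1" using pp nn0 ax2 by (auto simp: t_def field_simps)
      have part1: "XQ - t *\<^sub>R G \<in> gcone ?T'"
      proof -
        have G': "G = (\<Sum>v\<in>Q. if 0 < a \<bullet> v then c v *\<^sub>R v else 0)"
          unfolding G_def PQ using finQ by (simp add: sum.inter_filter)
        have "XQ - t *\<^sub>R G = (\<Sum>v\<in>Q. (c v - (if 0 < a \<bullet> v then t * c v else 0)) *\<^sub>R v)"
          unfolding XQ_def G' scaleR_sum_right sum_subtractf[symmetric]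
          by (rule sum.cong) (auto simp: scaleR_left_diff_distrib)
        moreover have "\<forall>v\<in>Q. 0 \<le> c v - (if 0 < a \<bullet> v then t * c v else 0)"
        proof
          fix v assume "v \<in> Q"
          then have "0 \<le> c v" using c(2) by (auto simp: Q_def)
          then have "t * c v \<le> c v" using t01 by (simp add: mult_left_le_one_le)
          then show "0 \<le> c v - (if 0 < a \<bullet> v then t * c v else 0)" using \<open>0 \<le> c v\<close> by auto
        qed
        ultimately have "XQ - t *\<^sub>R G \<in> gcone Q" by (intro gconeI) auto
        then show ?thesis using gQ by blast
      qed
      have part2: "XN + t *\<^sub>R G \<in> gcone ?T'"
      proof -
        have inner: "(\<Sum>g\<in>P. c g *\<^sub>R ((a \<bullet> g) *\<^sub>R h - (a \<bullet> h) *\<^sub>R g)) = p *\<^sub>R h - (a \<bullet> h) *\<^sub>R G" for h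
        proof -
          have "(\<Sum>g\<in>P. c g *\<^sub>R ((a \<bullet> g) *\<^sub>R h - (a \<bullet> h) *\<^sub>R g))
               = (\<Sum>g\<in>P. (c g * (a \<bullet> g)) *\<^sub>R h) - (\<Sum>g\<in>P. (a \<bullet> h) *\<^sub>R (c g *\<^sub>R g))"
            unfolding sum_subtractf[symmetric] by (rule sum.cong) (simp_all add: scaleR_right_diff_distrib mult.commute)
          also have "\<dots> = p *\<^sub>R h - (a \<bullet> h) *\<^sub>R G"
            unfolding p_def G_def by (simp add: scaleR_sum_left scaleR_sum_right)
          finally show ?thesis .
        qed
        have "(\<Sum>h\<in>N. (c h / p) *\<^sub>R (\<Sum>g\<in>P. c g *\<^sub>R ((a \<bullet> g) *\<^sub>R h - (a \<bullet> h) *\<^sub>R g)))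
              = (\<Sum>h\<in>N. (c h / p) *\<^sub>R (p *\<^sub>R h - (a \<bullet> h) *\<^sub>R G))" by (simp add: inner)
        also have "\<dots> = (\<Sum>h\<in>N. c h *\<^sub>R h) - (\<Sum>h\<in>N. (c h * (a \<bullet> h) / p) *\<^sub>R G)"
          using pp by (simp add: scaleR_right_diff_distrib sum_subtractf)
        also have "\<dots> = XN - (nn / p) *\<^sub>R G"
          unfolding XN_def nn_def by (simp add: scaleR_sum_left[symmetric] sum_divide_distrib)
        also have "\<dots> = XN + t *\<^sub>R G" by (simp add: t_def)
        finally have eq: "(\<Sum>h\<in>N. (c h / p) *\<^sub>R (\<Sum>g\<in>P. c g *\<^sub>R ((a \<bullet> g) *\<^sub>R h - (a \<bullet> h) *\<^sub>R g))) = XN + t *\<^sub>R G" .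
        have "(\<Sum>h\<in>N. (c h / p) *\<^sub>R (\<Sum>g\<in>P. c g *\<^sub>R ((a \<bullet> g) *\<^sub>R h - (a \<bullet> h) *\<^sub>R g))) \<in> gcone ?T'"
        proof (intro gcone_sum gcone_scale)
          fix h g assume h: "h \<in> N" and g: "g \<in> P"
          have "(a \<bullet> g) *\<^sub>R h - (a \<bullet> h) *\<^sub>R g \<in> ?T'"
            using h g unfolding fm_set_def N_def P_def by (auto intro!: image_eqI[of _ _ "(g,h)"])
          then show "(a \<bullet> g) *\<^sub>R h - (a \<bullet> h) *\<^sub>R g \<in> gcone ?T'" using gcone_gen[OF finT'] by blast
          show "0 \<le> c g" using g c(2) by (auto simp: P_def)
        next
          fix h assume "h \<in> N" then show "0 \<le> c h / p" using c(2) pp by (auto simp: N_def)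
        qed
        then show ?thesis using eq by simp
      qed
      have "x = (XQ - t *\<^sub>R G) + (XN + t *\<^sub>R G)" using x_split by simp
      then show ?thesis using part1 part2 gcone_add by metis
    qed
  qed
qed

definition intv :: "real ^ 'n \<Rightarrow> bool" where "intv v \<longleftrightarrow> (\<forall>i. v $ i \<in> \<int>)"

definition ratc :: "(real ^ 'n::finite) set \<Rightarrow> bool" where
  "ratc \<sigma> \<longleftrightarrow> (\<exists>T. finite T \<and> (\<forall>v\<in>T. intv v) \<and> \<sigma> = gcone T)"

lemma inj_lat: "inj lat_to_real"
  by (auto simp: inj_def lat_to_real_def vec_eq_iff)

lemma lat_add: "lat_to_real (a + b) = lat_to_real a + lat_to_real b"
  by (simp add: lat_to_real_def vec_eq_iff)
lemma lat_diff: "lat_to_real (a - b) = lat_to_real a - lat_to_real b"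
  by (simp add: lat_to_real_def vec_eq_iff)
lemma lat_zero: "lat_to_real 0 = 0"
  by (simp add: lat_to_real_def vec_eq_iff)
lemma lat_eq0: "lat_to_real a = 0 \<longleftrightarrow> a = 0"
  by (simp add: lat_to_real_def vec_eq_iff)

lemma intv_lat: "intv (lat_to_real m)"
  by (simp add: intv_def lat_to_real_def)

lemma intv_lat_ex: "intv v \<Longrightarrow> v = lat_to_real (\<chi> i. \<lfloor>v $ i\<rfloor>)"
  by (simp add: intv_def lat_to_real_def vec_eq_iff of_int_floor)

lemma rat_set_eq:
  fixes S :: "(int ^ 'n::finite) set"
  shows "{\<Sum>v\<in>S. c v *\<^sub>R lat_to_real v | c. \<forall>v\<in>S. c v \<ge> 0} = gcone (lat_to_real ` S)"
proof
  have ij: "inj_on lat_to_real S" using inj_lat by (rule inj_on_subset) simp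
  show "{\<Sum>v\<in>S. c v *\<^sub>R lat_to_real v | c. \<forall>v\<in>S. c v \<ge> 0} \<subseteq> gcone (lat_to_real ` S)"
  proof
    fix x assume "x \<in> {\<Sum>v\<in>S. c v *\<^sub>R lat_to_real v | c. \<forall>v\<in>S. c v \<ge> 0}"
    then obtain c where c: "x = (\<Sum>v\<in>S. c v *\<^sub>R lat_to_real v)" "\<forall>v\<in>S. c v \<ge> 0" by blast
    have "x = (\<Sum>w\<in>lat_to_real ` S. c (inv lat_to_real w) *\<^sub>R w)"
      using c(1) by (simp add: sum.reindex[OF ij] inv_f_f[OF inj_lat])
    moreover have "\<forall>w\<in>lat_to_real ` S. 0 \<le> c (inv lat_to_real w)" using c(2) by (auto simp: inv_f_f[OF inj_lat])
    ultimately show "x \<in> gcone (lat_to_real ` S)" by (intro gconeI) auto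
  qed
  show "gcone (lat_to_real ` S) \<subseteq> {\<Sum>v\<in>S. c v *\<^sub>R lat_to_real v | c. \<forall>v\<in>S. c v \<ge> 0}"
  proof
    fix x assume "x \<in> gcone (lat_to_real ` S)"
    then obtain d where d: "x = (\<Sum>w\<in>lat_to_real ` S. d w *\<^sub>R w)" "\<forall>w\<in>lat_to_real ` S. 0 \<le> d w"
      unfolding gcone_def by blast
    have "x = (\<Sum>v\<in>S. d (lat_to_real v) *\<^sub>R lat_to_real v)"
      using d(1) by (simp add: sum.reindex[OF ij])
    moreover have "\<forall>v\<in>S. 0 \<le> d (lat_to_real v)" using d(2) by auto
    ultimately show "x \<in> {\<Sum>v\<in>S. c v *\<^sub>R lat_to_real v | c. \<forall>v\<in>S. c v \<ge> 0}"
      by (intro CollectI exI[of _ "\<lambda>v. d (lat_to_real v)"]) auto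
  qed
qed

lemma rat_cone_iff:
  fixes \<sigma> :: "(real^'n::finite) set"
  shows "rat_cone \<sigma> \<longleftrightarrow> ratc \<sigma>"
proof
  assume "rat_cone \<sigma>"
  then obtain S :: "(int^'n) set" where S: "finite S" "\<sigma> = {\<Sum>v\<in>S. c v *\<^sub>R lat_to_real v | c. \<forall>v\<in>S. c v \<ge> 0}"
    unfolding rat_cone_def by auto
  then have S2: "\<sigma> = gcone (lat_to_real ` S)" by (simp add: rat_set_eq)
  have "finite (lat_to_real ` S)" "\<forall>v\<in>lat_to_real ` S. intv v" using S(1) intv_lat by auto
  then show "ratc \<sigma>" unfolding ratc_def using S2 by blast
next
  assume "ratc \<sigma>"
  then obtain T where T: "finite T" "\<forall>v\<in>T. intv v" "\<sigma> = gcone T" unfolding ratc_def by blast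
  define S where "S = lat_to_real -` T"
  have fS: "finite S" unfolding S_def using T(1) inj_lat by (rule finite_vimageI)
  have "lat_to_real ` S = T"
  proof
    show "lat_to_real ` S \<subseteq> T" unfolding S_def by auto
    show "T \<subseteq> lat_to_real ` S"
    proof
      fix v assume "v \<in> T"
      then have "v = lat_to_real (\<chi> i. \<lfloor>v $ i\<rfloor>)" using T(2) intv_lat_ex by blast
      then show "v \<in> lat_to_real ` S" unfolding S_def using \<open>v \<in> T\<close> by (metis image_eqI vimageI)
    qed
  qed
  then have "\<sigma> = {\<Sum>v\<in>S. c v *\<^sub>R lat_to_real v | c. \<forall>v\<in>S. c v \<ge> 0}" using T(3) by (simp add: rat_set_eq)
  then show "rat_cone \<sigma>" unfolding rat_cone_def using fS by blast
qed

lemma intv_inner: "intv a \<Longrightarrow> intv g \<Longrightarrow> a \<bullet> g \<in> \<int>"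
  unfolding intv_def inner_vec_def by (auto intro!: Ints_sum Ints_mult simp: inner_real_def)

lemma ratc_halfspace:
  assumes "ratc \<sigma>" "intv a"
  shows "ratc (\<sigma> \<inter> {v. 0 \<le> a \<bullet> v})"
proof -
  obtain T where T: "finite T" "\<forall>v\<in>T. intv v" "\<sigma> = gcone T" using assms(1) unfolding ratc_def by blast
  have "\<sigma> \<inter> {v. 0 \<le> a \<bullet> v} = gcone (fm_set a T)" using fm_correct[OF T(1)] T(3) by simp
  moreover have "finite (fm_set a T)" using T(1) by (rule finite_fm_set)
  moreover have "\<forall>v\<in>fm_set a T. intv v"
  proof
    fix w assume "w \<in> fm_set a T"
    then consider "w \<in> T"
        | g h where "g \<in> T" "h \<in> T" "w = (a \<bullet> g) *\<^sub>R h - (a \<bullet> h) *\<^sub>R g"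
        unfolding fm_set_def by auto
    then show "intv w"
    proof cases
      case 1 then show ?thesis using T(2) by blast
    next
      case 2
      have "a \<bullet> g \<in> \<int>" "a \<bullet> h \<in> \<int>" using 2 T(2) assms(2) intv_inner by blast+
      then show ?thesis using 2 T(2) unfolding intv_def by (auto intro!: Ints_diff Ints_mult)
    qed
  qed
  ultimately show ?thesis unfolding ratc_def by blast
qed

lemma ratc_halfspaces:
  assumes "finite A" "\<forall>a\<in>A. intv a" "ratc \<sigma>"
  shows "ratc (\<sigma> \<inter> {v. \<forall>a\<in>A. 0 \<le> a \<bullet> v})"
  using assms(1,2)
proof (induction A rule: finite_induct)
  case empty then show ?case using assms(3) by simp
next
  case (insert b A)
  have "\<sigma> \<inter> {v. \<forall>a\<in>insert b A. 0 \<le> a \<bullet> v} = (\<sigma> \<inter> {v. \<forall>a\<in>A. 0 \<le> a \<bullet> v}) \<inter> {v. 0 \<le> b \<bullet> v}" by auto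
  then show ?case using insert ratc_halfspace by auto
qed

lemma ratc_face:
  assumes "ratc P" "F face_of P" "F \<noteq> {}"
  shows "ratc F"
proof -
  obtain T where T: "finite T" "\<forall>v\<in>T. intv v" "P = gcone T" using assms(1) unfolding ratc_def by blast
  have "F = gcone (T \<inter> F)" using face_gcone[OF T(1)] assms(2,3) T(3) by blast
  moreover have "finite (T \<inter> F)" "\<forall>v\<in>T \<inter> F. intv v" using T by auto
  ultimately show ?thesis unfolding ratc_def by blast
qed

lemma finite_faces_ratc:
  assumes "ratc P" shows "finite {F. F face_of P \<and> F \<noteq> {}}"
  using assms finite_faces_gcone unfolding ratc_def by blast

lemma zero_in_face_ratc:
  assumes "ratc P" "F face_of P" "F \<noteq> {}"
  shows "0 \<in> F"
proof -
  obtain T where T: "finite T" "\<forall>v\<in>T. intv v" "P = gcone T" using assms(1) unfolding ratc_def by blast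
  have "F = gcone (T \<inter> F)" using face_gcone[OF T(1)] assms(2,3) T(3) by blast
  then show ?thesis using gcone_0 by metis
qed

lemma convex_ratc: "ratc P \<Longrightarrow> convex P"
  unfolding ratc_def using convex_gcone by blast

lemma zero_face_ratc: "ratc P \<Longrightarrow> strongly_convex P \<Longrightarrow> {0} face_of P"
  unfolding ratc_def strongly_convex_def using zero_face_of_gcone by blast

lemma fan_pair_face:
  assumes P12: "(P1 \<inter> P2) face_of P1" "(P1 \<inter> P2) face_of P2"
    and F1: "F1 face_of P1" and F2: "F2 face_of P2"
  shows "(F1 \<inter> F2) face_of F1"
proof -
  let ?P = "P1 \<inter> P2"
  have s1: "F1 \<subseteq> P1" "F2 \<subseteq> P2" using F1 F2 face_of_imp_subset by blast+
  have a: "(F1 \<inter> ?P) face_of ?P"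
    using face_of_Int[OF F1 P12(1)] by (rule face_of_subset) (auto simp: s1)
  have b: "(F2 \<inter> ?P) face_of ?P"
    using face_of_Int[OF F2 P12(2)] by (rule face_of_subset) (auto simp: s1)
  have "((F1 \<inter> ?P) \<inter> (F2 \<inter> ?P)) face_of ?P" using face_of_Int[OF a b] .
  moreover have "(F1 \<inter> ?P) \<inter> (F2 \<inter> ?P) = F1 \<inter> F2" using s1 by blast
  ultimately have "(F1 \<inter> F2) face_of ?P" by simp
  then have "(F1 \<inter> F2) face_of P1" using P12(1) face_of_trans by blast
  then show ?thesis by (rule face_of_subset) (auto simp: s1)
qed

definition Cc :: "(int ^ 'n::finite) set \<Rightarrow> int ^ 'n \<Rightarrow> (real ^ 'n) set" where
  "Cc S m = {v. \<forall>m'\<in>S. lat_to_real m \<bullet> v \<le> lat_to_real m' \<bullet> v}"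

lemma Cc_halfspaces: "Cc S m = {v. \<forall>a\<in>(\<lambda>m'. lat_to_real m' - lat_to_real m) ` S. 0 \<le> a \<bullet> v}"
  by (auto simp: Cc_def inner_diff_left)

lemma ratc_Int_Cc: "finite S \<Longrightarrow> ratc \<sigma> \<Longrightarrow> ratc (\<sigma> \<inter> Cc S m)"
  unfolding Cc_halfspaces
  by (rule ratc_halfspaces) (auto simp: lat_diff[symmetric] intv_lat)

lemma convex_Cc: "convex (Cc S m)"
  unfolding convex_def Cc_def
proof (intro allI impI ballI CollectI)
  fix x y :: "real^'a" and u v :: real and m'
  assume x: "x \<in> {v. \<forall>m'\<in>S. lat_to_real m \<bullet> v \<le> lat_to_real m' \<bullet> v}"
    and y: "y \<in> {v. \<forall>m'\<in>S. lat_to_real m \<bullet> v \<le> lat_to_real m' \<bullet> v}"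
    and uv: "0 \<le> u" "0 \<le> v" "u + v = 1" and m': "m' \<in> S"
  have "u * (lat_to_real m \<bullet> x) \<le> u * (lat_to_real m' \<bullet> x)" using x m' uv by (auto intro: mult_left_mono)
  moreover have "v * (lat_to_real m \<bullet> y) \<le> v * (lat_to_real m' \<bullet> y)" using y m' uv by (auto intro: mult_left_mono)
  ultimately show "lat_to_real m \<bullet> (u *\<^sub>R x + v *\<^sub>R y) \<le> lat_to_real m' \<bullet> (u *\<^sub>R x + v *\<^sub>R y)"
    by (simp add: inner_add_right)
qed

lemma Cc_face:
  assumes "m1 \<in> S" "m2 \<in> S"
  shows "(Cc S m1 \<inter> Cc S m2) face_of Cc S m1"
proof -
  have eq: "Cc S m1 \<inter> Cc S m2 = Cc S m1 \<inter> {x. (lat_to_real m1 - lat_to_real m2) \<bullet> x = 0}"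
  proof
    show "Cc S m1 \<inter> Cc S m2 \<subseteq> Cc S m1 \<inter> {x. (lat_to_real m1 - lat_to_real m2) \<bullet> x = 0}"
      using assms by (force simp: Cc_def inner_diff_left)
    show "Cc S m1 \<inter> {x. (lat_to_real m1 - lat_to_real m2) \<bullet> x = 0} \<subseteq> Cc S m1 \<inter> Cc S m2"
      by (auto simp: Cc_def inner_diff_left)
  qed
  have "(Cc S m1 \<inter> {x. (lat_to_real m1 - lat_to_real m2) \<bullet> x = 0}) face_of Cc S m1"
    by (rule face_of_Int_supporting_hyperplane_le[OF convex_Cc]) (use assms in \<open>auto simp: Cc_def inner_diff_left\<close>)
  then show ?thesis using eq by simp
qed

lemma Cc_cover:
  assumes "finite S" "S \<noteq> {}"
  shows "\<exists>m\<in>S. x \<in> Cc S m"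
proof -
  let ?g = "\<lambda>m. lat_to_real m \<bullet> x"
  have "Min (?g ` S) \<in> ?g ` S" using assms by simp
  then obtain m where m: "m \<in> S" "?g m = Min (?g ` S)" by auto
  have "\<forall>m'\<in>S. ?g m \<le> ?g m'" using m assms by simp
  then have "x \<in> Cc S m" unfolding Cc_def by blast
  then show ?thesis using m(1) by blast
qed

definition refine_fan :: "(real ^ 'n::finite) set set \<Rightarrow> (int ^ 'n) set \<Rightarrow> (real ^ 'n) set set" where
  "refine_fan \<Sigma> S = {F. F \<noteq> {} \<and> (\<exists>\<sigma>\<in>\<Sigma>. \<exists>m\<in>S. F face_of (\<sigma> \<inter> Cc S m))}"

lemma fan_ratc: "is_fan \<Sigma> \<Longrightarrow> \<sigma> \<in> \<Sigma> \<Longrightarrow> ratc \<sigma>"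
  unfolding is_fan_def by (simp add: rat_cone_iff)

lemma refine_fan_props:
  assumes fan: "is_fan \<Sigma>" and finS: "finite S" and neS: "S \<noteq> {}"
  shows "refines (refine_fan \<Sigma> S) \<Sigma>" and "\<forall>\<tau>\<in>refine_fan \<Sigma> S. \<exists>m\<in>S. \<tau> \<subseteq> Cc S m"
proof -
  let ?S' = "refine_fan \<Sigma> S"
  have finSig: "finite \<Sigma>" using fan unfolding is_fan_def by blast
  have scSig: "\<forall>\<sigma>\<in>\<Sigma>. strongly_convex \<sigma>" using fan unfolding is_fan_def by blast
  have pairSig: "\<forall>\<sigma>\<in>\<Sigma>. \<forall>\<sigma>'\<in>\<Sigma>. (\<sigma> \<inter> \<sigma>') face_of \<sigma> \<and> (\<sigma> \<inter> \<sigma>') face_of \<sigma>'"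
    using fan unfolding is_fan_def by blast
  have ratP: "ratc (\<sigma> \<inter> Cc S m)" if "\<sigma> \<in> \<Sigma>" for \<sigma> m
    using ratc_Int_Cc[OF finS fan_ratc[OF fan that]] .
  have fin': "finite ?S'"
  proof -
    have "?S' \<subseteq> (\<Union>\<sigma>\<in>\<Sigma>. \<Union>m\<in>S. {F. F face_of (\<sigma> \<inter> Cc S m) \<and> F \<noteq> {}})"
      unfolding refine_fan_def by blast
    moreover have "finite (\<Union>\<sigma>\<in>\<Sigma>. \<Union>m\<in>S. {F. F face_of (\<sigma> \<inter> Cc S m) \<and> F \<noteq> {}})"
      using finSig finS ratP finite_faces_ratc by blast
    ultimately show ?thesis using finite_subset by blast
  qed
  have ratsc: "rat_cone F \<and> strongly_convex F" if FS: "F \<in> ?S'" for F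
  proof -
    obtain \<sigma> m where sm: "\<sigma> \<in> \<Sigma>" "m \<in> S" "F face_of (\<sigma> \<inter> Cc S m)" "F \<noteq> {}"
      using FS unfolding refine_fan_def by blast
    have "ratc F" using ratc_face[OF ratP[OF sm(1)] sm(3,4)] .
    moreover have "0 \<in> F" using zero_in_face_ratc[OF ratP[OF sm(1)] sm(3,4)] .
    moreover have "F \<subseteq> \<sigma>" using sm(3) face_of_imp_subset by blast
    moreover have "\<sigma> \<inter> uminus ` \<sigma> = {0}" using scSig sm(1) unfolding strongly_convex_def by blast
    ultimately have "F \<inter> uminus ` F = {0}" by force
    then show ?thesis using \<open>ratc F\<close> by (simp add: rat_cone_iff strongly_convex_def)
  qed
  have faces: "G \<in> ?S'" if "F \<in> ?S'" "G face_of F" "G \<noteq> {}" for F G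
    using that face_of_trans unfolding refine_fan_def by blast
  have pair: "(F1 \<inter> F2) face_of F1" if F1: "F1 \<in> ?S'" and F2: "F2 \<in> ?S'" for F1 F2
  proof -
    obtain \<sigma>1 m1 where s1: "\<sigma>1 \<in> \<Sigma>" "m1 \<in> S" "F1 face_of (\<sigma>1 \<inter> Cc S m1)"
      using F1 unfolding refine_fan_def by blast
    obtain \<sigma>2 m2 where s2: "\<sigma>2 \<in> \<Sigma>" "m2 \<in> S" "F2 face_of (\<sigma>2 \<inter> Cc S m2)"
      using F2 unfolding refine_fan_def by blast
    have a: "((\<sigma>1 \<inter> \<sigma>2) \<inter> (Cc S m1 \<inter> Cc S m2)) face_of (\<sigma>1 \<inter> Cc S m1)"
      using face_of_Int_Int[OF conjunct1[OF pairSig[rule_format, OF s1(1) s2(1)]] Cc_face[OF s1(2) s2(2)]] .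
    have b: "((\<sigma>2 \<inter> \<sigma>1) \<inter> (Cc S m2 \<inter> Cc S m1)) face_of (\<sigma>2 \<inter> Cc S m2)"
      using face_of_Int_Int[OF conjunct1[OF pairSig[rule_format, OF s2(1) s1(1)]] Cc_face[OF s2(2) s1(2)]] .
    have e1: "(\<sigma>1 \<inter> \<sigma>2) \<inter> (Cc S m1 \<inter> Cc S m2) = (\<sigma>1 \<inter> Cc S m1) \<inter> (\<sigma>2 \<inter> Cc S m2)" by blast
    have e2: "(\<sigma>2 \<inter> \<sigma>1) \<inter> (Cc S m2 \<inter> Cc S m1) = (\<sigma>1 \<inter> Cc S m1) \<inter> (\<sigma>2 \<inter> Cc S m2)" by blast
    show ?thesis using fan_pair_face[OF a[unfolded e1] b[unfolded e2] s1(3) s2(3)] .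
  qed
  have isfan: "is_fan ?S'"
    unfolding is_fan_def
  proof (intro conjI ballI allI impI)
    show "finite ?S'" by (rule fin')
    show "rat_cone F" if "F \<in> ?S'" for F using ratsc[OF that] by blast
    show "strongly_convex F" if "F \<in> ?S'" for F using ratsc[OF that] by blast
    show "G \<in> ?S'" if "F \<in> ?S'" "G face_of F \<and> G \<noteq> {}" for F G using faces that by blast
    show "(F1 \<inter> F2) face_of F1" if "F1 \<in> ?S'" "F2 \<in> ?S'" for F1 F2 using pair that by blast
    show "(F1 \<inter> F2) face_of F2" if "F1 \<in> ?S'" "F2 \<in> ?S'" for F1 F2
      using pair[OF that(2,1)] by (simp add: Int_commute)
  qed
  have sub: "\<forall>F\<in>?S'. \<exists>\<sigma>\<in>\<Sigma>. F \<subseteq> \<sigma>"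
    unfolding refine_fan_def using face_of_imp_subset by blast
  have un: "\<Union>?S' = \<Union>\<Sigma>"
  proof
    show "\<Union>?S' \<subseteq> \<Union>\<Sigma>" using sub by blast
    show "\<Union>\<Sigma> \<subseteq> \<Union>?S'"
    proof
      fix x assume "x \<in> \<Union>\<Sigma>"
      then obtain \<sigma> where \<sigma>: "\<sigma> \<in> \<Sigma>" "x \<in> \<sigma>" by blast
      obtain m where m: "m \<in> S" "x \<in> Cc S m" using Cc_cover[OF finS neS] by blast
      have "(\<sigma> \<inter> Cc S m) face_of (\<sigma> \<inter> Cc S m)"
        using convex_ratc[OF ratP[OF \<sigma>(1)]] by (rule face_of_refl)
      then have "\<sigma> \<inter> Cc S m \<in> ?S'" unfolding refine_fan_def using \<sigma> m by blast
      then show "x \<in> \<Union>?S'" using \<sigma> m by blast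
    qed
  qed
  show "refines ?S' \<Sigma>" unfolding refines_def using isfan sub un by blast
  show "\<forall>\<tau>\<in>?S'. \<exists>m\<in>S. \<tau> \<subseteq> Cc S m"
    unfolding refine_fan_def using face_of_imp_subset by blast
qed

definition Ev :: "(int ^ 'n::finite \<Rightarrow> 'k::field) \<Rightarrow> (int ^ 'n) set \<Rightarrow> int ^ 'n \<Rightarrow>
    ((real ^ 'n) set \<times> (int ^ 'n \<Rightarrow> 'k)) \<Rightarrow> 'k" where
  "Ev f S m p = (\<Sum>m'\<in>S. f m' * snd p (m' - m))"

lemma shift_support:
  fixes f :: "int ^ 'n::finite \<Rightarrow> 'k::field"
  shows "{u. f (u + m) \<noteq> 0} = (\<lambda>m'. m' - m) ` {m. f m \<noteq> 0}"
proof (rule set_eqI)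
  fix u
  show "u \<in> {u. f (u + m) \<noteq> 0} \<longleftrightarrow> u \<in> (\<lambda>m'. m' - m) ` {m. f m \<noteq> 0}"
  proof
    assume "u \<in> {u. f (u + m) \<noteq> 0}"
    then show "u \<in> (\<lambda>m'. m' - m) ` {m. f m \<noteq> 0}" by (intro image_eqI[of _ _ "u + m"]) (auto simp: algebra_simps)
  qed auto
qed

lemma eval_shift:
  fixes f :: "int ^ 'n::finite \<Rightarrow> 'k::field"
  shows "eval_poly (\<lambda>u. f (u + m)) p = Ev f {m. f m \<noteq> 0} m p"
proof -
  have inj: "inj_on (\<lambda>m'. m' - m) {m. f m \<noteq> 0}" by (simp add: inj_on_def)
  show ?thesis unfolding eval_poly_def Ev_def shift_support sum.reindex[OF inj] by simp
qed

lemma tp: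
  assumes "p \<in> tpoints \<Sigma>"
  shows "fst p \<in> \<Sigma>" "\<forall>m. snd p m \<noteq> 0 \<longleftrightarrow> m \<in> perp_lat (fst p)"
    "\<forall>m\<in>perp_lat (fst p). \<forall>m'\<in>perp_lat (fst p). snd p (m + m') = snd p m * snd p m'"
proof -
  obtain \<tau> chi where pe: "p = (\<tau>, chi)" by (cases p)
  have "\<tau> \<in> \<Sigma> \<and> (\<forall>m. chi m \<noteq> 0 \<longleftrightarrow> m \<in> perp_lat \<tau>) \<and>
      (\<forall>m\<in>perp_lat \<tau>. \<forall>m'\<in>perp_lat \<tau>. chi (m + m') = chi m * chi m')"
    using assms unfolding pe tpoints_def by simp
  then show "fst p \<in> \<Sigma>" "\<forall>m. snd p m \<noteq> 0 \<longleftrightarrow> m \<in> perp_lat (fst p)"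
    "\<forall>m\<in>perp_lat (fst p). \<forall>m'\<in>perp_lat (fst p). snd p (m + m') = snd p m * snd p m'"
    unfolding pe by auto
qed

lemma perp_diff: "a \<in> perp_lat \<tau> \<Longrightarrow> b \<in> perp_lat \<tau> \<Longrightarrow> a - b \<in> perp_lat \<tau>"
  by (simp add: perp_lat_def lat_diff inner_diff_left)

lemma perp_zero_set: "perp_lat {0} = UNIV"
  by (simp add: perp_lat_def)

lemma Ev_rel:
  fixes f :: "int ^ 'n::finite \<Rightarrow> 'k::field"
  assumes p: "p \<in> tpoints \<Sigma>'" and m1: "fst p \<subseteq> Cc S m1" and m2: "fst p \<subseteq> Cc S m2"
    and S: "m1 \<in> S" "m2 \<in> S"
  shows "Ev f S m1 p = snd p (m2 - m1) * Ev f S m2 p" "snd p (m2 - m1) \<noteq> 0"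
proof -
  have d: "m2 - m1 \<in> perp_lat (fst p)"
    unfolding perp_lat_def
  proof (intro CollectI ballI)
    fix v assume v: "v \<in> fst p"
    have "lat_to_real m1 \<bullet> v \<le> lat_to_real m2 \<bullet> v" using m1 v S unfolding Cc_def by blast
    moreover have "lat_to_real m2 \<bullet> v \<le> lat_to_real m1 \<bullet> v" using m2 v S unfolding Cc_def by blast
    ultimately show "lat_to_real (m2 - m1) \<bullet> v = 0" by (simp add: lat_diff inner_diff_left)
  qed
  note t = tp[OF p]
  show nz: "snd p (m2 - m1) \<noteq> 0" using t(2) d by blast
  have tm: "snd p (m' - m1) = snd p (m2 - m1) * snd p (m' - m2)" for m'
  proof (cases "m' - m2 \<in> perp_lat (fst p)")
    case True
    have "snd p ((m' - m2) + (m2 - m1)) = snd p (m' - m2) * snd p (m2 - m1)"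
      using t(3)[rule_format, OF True d] .
    then show ?thesis by (simp add: mult.commute)
  next
    case False
    have "m' - m1 \<notin> perp_lat (fst p)"
    proof
      assume "m' - m1 \<in> perp_lat (fst p)"
      then have "(m' - m1) - (m2 - m1) \<in> perp_lat (fst p)" using d perp_diff by blast
      then show False using False by simp
    qed
    then have "snd p (m' - m1) = 0" using t(2) by blast
    moreover have "snd p (m' - m2) = 0" using False t(2) by blast
    ultimately show ?thesis by simp
  qed
  show "Ev f S m1 p = snd p (m2 - m1) * Ev f S m2 p"
    unfolding Ev_def sum_distrib_left
  proof (rule sum.cong[OF refl])
    fix x assume "x \<in> S"
    show "f x * snd p (x - m1) = snd p (m2 - m1) * (f x * snd p (x - m2))"
      unfolding tm[of x] by (simp add: mult.left_commute)
  qed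
qed

theorem lemma6p1:
  fixes \<Sigma> :: "(real ^ 'n::finite) set set"
    and W :: "((real ^ 'n) set \<times> (int ^ 'n \<Rightarrow> 'k::{alg_closed_field, field_char_0})) set"
  assumes "is_fan \<Sigma>"
    and "zclosed \<Sigma> W"
    and "W \<noteq> tpoints \<Sigma>"
    and "\<forall>Z. irred_component \<Sigma> W Z \<longrightarrow> \<not> Z \<subseteq> toric_boundary \<Sigma>"
  shows "\<exists>\<Sigma>'. refines \<Sigma>' \<Sigma> \<and>
           (\<forall>\<tau>\<in>\<Sigma>'. orbit_dim \<tau> = 0 \<longrightarrow>
              \<not> (orbit \<Sigma>' \<tau> \<subseteq> strict_transform \<Sigma>' W))"
proof -
  have fan: "is_fan \<Sigma>" by fact
  have Wsub: "W \<subseteq> tpoints \<Sigma>" using assms(2) unfolding zclosed_def by blast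
  obtain p where p: "p \<in> tpoints \<Sigma>" "p \<notin> W" using assms(3) Wsub by blast
  have \<rho>\<Sigma>: "fst p \<in> \<Sigma>" using tp(1)[OF p(1)] .
  obtain F where F: "\<forall>f\<in>F. chart_poly (fst p) f"
      "W \<inter> chart \<Sigma> (fst p) = {q \<in> chart \<Sigma> (fst p). \<forall>f\<in>F. eval_poly f q = 0}"
    using assms(2) \<rho>\<Sigma> unfolding zclosed_def by blast
  have rat\<rho>: "ratc (fst p)" using fan_ratc[OF fan \<rho>\<Sigma>] .
  have sc\<rho>: "strongly_convex (fst p)" using fan \<rho>\<Sigma> unfolding is_fan_def by blast
  have pchart: "p \<in> chart \<Sigma> (fst p)"
    unfolding chart_def using p(1) face_of_refl[OF convex_ratc[OF rat\<rho>]] by simp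
  then obtain f where f: "f \<in> F" "eval_poly f p \<noteq> 0" using F(2) p(2) by blast
  define S where "S = {m. f m \<noteq> 0}"
  have finS: "finite S" using F(1) f(1) unfolding chart_poly_def S_def by blast
  have neS: "S \<noteq> {}"
  proof
    assume "S = {}"
    then have "eval_poly f p = 0" unfolding eval_poly_def S_def[symmetric] by simp
    then show False using f(2) by simp
  qed
  have fW: "eval_poly f q = 0" if q: "q \<in> W" "fst q = {0}" for q
  proof -
    have "q \<in> tpoints \<Sigma>" using q Wsub by blast
    moreover have "{0} face_of fst p" using zero_face_ratc[OF rat\<rho> sc\<rho>] .
    ultimately have "q \<in> chart \<Sigma> (fst p)" unfolding chart_def using q by simp
    then have "q \<in> W \<inter> chart \<Sigma> (fst p)" using q by blast
    then show ?thesis using F(2) f(1) by blast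
  qed
  define \<Sigma>' where "\<Sigma>' = refine_fan \<Sigma> S"
  have ref: "refines \<Sigma>' \<Sigma>" unfolding \<Sigma>'_def using refine_fan_props(1)[OF fan finS neS] .
  have cov: "\<forall>\<tau>\<in>\<Sigma>'. \<exists>m\<in>S. \<tau> \<subseteq> Cc S m" unfolding \<Sigma>'_def using refine_fan_props(2)[OF fan finS neS] .
  define Z where "Z = {q \<in> tpoints \<Sigma>'. \<forall>m\<in>S. fst q \<subseteq> Cc S m \<longrightarrow> Ev f S m q = 0}"
  have Zcl: "zclosed \<Sigma>' Z"
    unfolding zclosed_def
  proof (intro conjI ballI)
    show "Z \<subseteq> tpoints \<Sigma>'" unfolding Z_def by blast
    fix \<sigma> assume \<sigma>: "\<sigma> \<in> \<Sigma>'"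
    obtain m\<sigma> where m\<sigma>: "m\<sigma> \<in> S" "\<sigma> \<subseteq> Cc S m\<sigma>" using cov \<sigma> by blast
    let ?g = "\<lambda>u. f (u + m\<sigma>)"
    have cp: "chart_poly \<sigma> ?g"
      unfolding chart_poly_def
    proof
      show "finite {u. ?g u \<noteq> 0}" unfolding shift_support using finS S_def by simp
      show "{u. ?g u \<noteq> 0} \<subseteq> dual_lat \<sigma>"
      proof
        fix u assume u: "u \<in> {u. ?g u \<noteq> 0}"
        then have uS: "u + m\<sigma> \<in> S" unfolding S_def by simp
        show "u \<in> dual_lat \<sigma>" unfolding dual_lat_def
        proof (intro CollectI ballI)
          fix v assume "v \<in> \<sigma>"
          then have "lat_to_real m\<sigma> \<bullet> v \<le> lat_to_real (u + m\<sigma>) \<bullet> v" using m\<sigma>(2) uS unfolding Cc_def by blast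
          then show "0 \<le> lat_to_real u \<bullet> v" by (simp add: lat_add inner_add_left)
        qed
      qed
    qed
    have eq: "Z \<inter> chart \<Sigma>' \<sigma> = {q \<in> chart \<Sigma>' \<sigma>. \<forall>g\<in>{?g}. eval_poly g q = 0}"
    proof (rule set_eqI)
      fix q
      show "q \<in> Z \<inter> chart \<Sigma>' \<sigma> \<longleftrightarrow> q \<in> {q \<in> chart \<Sigma>' \<sigma>. \<forall>g\<in>{?g}. eval_poly g q = 0}"
      proof (cases "q \<in> chart \<Sigma>' \<sigma>")
        case False then show ?thesis by simp
      next
        case True
        then have qt: "q \<in> tpoints \<Sigma>'" and qf: "fst q face_of \<sigma>" unfolding chart_def by auto
        have qC: "fst q \<subseteq> Cc S m\<sigma>" using face_of_imp_subset[OF qf] m\<sigma>(2) by blast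
        have ev: "eval_poly ?g q = Ev f S m\<sigma> q" unfolding S_def by (rule eval_shift)
        have "q \<in> Z \<longleftrightarrow> Ev f S m\<sigma> q = 0"
        proof
          assume "q \<in> Z" then show "Ev f S m\<sigma> q = 0" using qC m\<sigma>(1) unfolding Z_def by blast
        next
          assume z: "Ev f S m\<sigma> q = 0"
          have "\<forall>m\<in>S. fst q \<subseteq> Cc S m \<longrightarrow> Ev f S m q = 0"
          proof (intro ballI impI)
            fix m assume "m \<in> S" "fst q \<subseteq> Cc S m"
            then have "Ev f S m q = snd q (m\<sigma> - m) * Ev f S m\<sigma> q"
              using Ev_rel(1)[OF qt _ qC] m\<sigma>(1) by blast
            then show "Ev f S m q = 0" using z by simp
          qed
          then show "q \<in> Z" unfolding Z_def using qt by blast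
        qed
        then show ?thesis using True ev by simp
      qed
    qed
    show "\<exists>F. (\<forall>f\<in>F. chart_poly \<sigma> f) \<and> Z \<inter> chart \<Sigma>' \<sigma> = {p \<in> chart \<Sigma>' \<sigma>. \<forall>f\<in>F. eval_poly f p = 0}"
      using cp eq by (intro exI[of _ "{?g}"]) simp
  qed
  have AZ: "{q \<in> big_torus \<Sigma>'. q \<in> W} \<subseteq> Z"
  proof
    fix q assume "q \<in> {q \<in> big_torus \<Sigma>'. q \<in> W}"
    then have qt: "q \<in> tpoints \<Sigma>'" and q0: "fst q = {0}" and qW: "q \<in> W" unfolding big_torus_def by auto
    note t = tp[OF qt]
    have allperp: "m \<in> perp_lat (fst q)" for m using q0 by (simp add: perp_lat_def)
    have "Ev f S m q = 0" if m: "m \<in> S" for m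
    proof -
      have mul: "snd q m' = snd q (m' - m) * snd q m" for m'
      proof -
        have "snd q ((m' - m) + m) = snd q (m' - m) * snd q m" using t(3) allperp by blast
        then show ?thesis by simp
      qed
      have "eval_poly f q = (\<Sum>m'\<in>S. f m' * snd q m')" unfolding eval_poly_def S_def by simp
      also have "\<dots> = snd q m * Ev f S m q" unfolding Ev_def sum_distrib_left
      proof (rule sum.cong[OF refl])
        fix x assume "x \<in> S"
        show "f x * snd q x = snd q m * (f x * snd q (x - m))"
          unfolding mul[of x] by (simp add: mult.commute mult.left_commute)
      qed
      finally have "snd q m * Ev f S m q = 0" using fW[OF qW q0] by simp
      moreover have "snd q m \<noteq> 0" using t(2) allperp by blast
      ultimately show ?thesis by simp
    qed
    then show "q \<in> Z" unfolding Z_def using qt by blast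
  qed
  have stZ: "strict_transform \<Sigma>' W \<subseteq> Z"
    unfolding strict_transform_def zclosure_def using Zcl AZ by blast
  have main: "\<not> (orbit \<Sigma>' \<tau> \<subseteq> strict_transform \<Sigma>' W)" if \<tau>: "\<tau> \<in> \<Sigma>'" and od: "orbit_dim \<tau> = 0" for \<tau>
  proof -
    have perp: "perp_lat \<tau> = {0}"
    proof (rule set_eqI)
      fix m :: "int ^ 'n"
      show "m \<in> perp_lat \<tau> \<longleftrightarrow> m \<in> {0}"
      proof
        assume mp: "m \<in> perp_lat \<tau>"
        show "m \<in> {0}"
        proof (rule ccontr)
          assume "m \<notin> {0}"
          then have a0: "lat_to_real m \<noteq> 0" by (simp add: lat_to_real_def vec_eq_iff)
          have "\<tau> \<subseteq> {x. lat_to_real m \<bullet> x = 0}" using mp unfolding perp_lat_def by blast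
          then have "dim \<tau> \<le> dim {x. lat_to_real m \<bullet> x = 0}" by (rule dim_subset)
          also have "\<dots> = CARD('n) - 1" using a0 by (simp add: dim_hyperplane)
          finally have "dim \<tau> \<le> CARD('n) - 1" .
          moreover have "CARD('n) \<le> dim \<tau>" using od unfolding orbit_dim_def by simp
          moreover have "0 < CARD('n)" by simp
          ultimately show False by linarith
        qed
      next
        assume "m \<in> {0}" then show "m \<in> perp_lat \<tau>" by (simp add: perp_lat_def lat_zero)
      qed
    qed
    define p0 :: "(real ^ 'n) set \<times> (int ^ 'n \<Rightarrow> 'k)" where "p0 = (\<tau>, \<lambda>m. if m = 0 then 1 else 0)"
    have p0t: "p0 \<in> tpoints \<Sigma>'" unfolding p0_def tpoints_def using \<tau> perp by simp
    have p0o: "p0 \<in> orbit \<Sigma>' \<tau>" unfolding orbit_def using p0t by (simp add: p0_def)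
    obtain m\<tau> where m\<tau>: "m\<tau> \<in> S" "\<tau> \<subseteq> Cc S m\<tau>" using cov \<tau> by blast
    have "Ev f S m\<tau> p0 = (\<Sum>m'\<in>S. if m' = m\<tau> then f m' else 0)"
      unfolding Ev_def p0_def by (rule sum.cong[OF refl]) simp
    also have "\<dots> = f m\<tau>" using finS m\<tau>(1) by simp
    finally have "Ev f S m\<tau> p0 \<noteq> 0" using m\<tau>(1) unfolding S_def by simp
    then have "p0 \<notin> Z" unfolding Z_def using m\<tau> by (auto simp: p0_def)
    then show ?thesis using p0o stZ by blast
  qed
  show ?thesis using ref main by blast
qed

end
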